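(* Let $H\ge2$ be an integer and consider an $H$-round online first-price auction in which $v_t=1$ for all $t\in\{1,\dots,H\}$ and \[ m_t=\begin{cases}0,& t<\tau,\\ \delta,&\tau\le t\le H,\end{cases} \] where $\tau$ is drawn uniformly at random from $\{1,2,\dots,H\}$ and $\delta=\frac1H$. Then every non-anticipatory (admissible) policy has expected dynamic regret at least $\frac12-\frac1{2H}$, i.e. \[ \mathbb{E}\left[\sum_{t=1}^H\max\{v_t-m_t,0\}-\sum_{t=1}^H r(b_t;v_t,m_t)\right]\ge\frac12-\frac1{2H}, \] the expectation being over $\tau$ and the policy's randomness.
   Context: In an $H$-round online first-price auction, at each round $t$ the learner observes its value $v_t\in[0,1]$, submits a bid $b_t\in[0,1]$, then observes $m_t\in[0,1]$, the highest bid of the other bidders, and receives reward $r(b_t;v_t,m_t)$ with $r(b;v,m)\coloneqq(v-b)\mathbbm{1}(b\ge m)$. A non-anticipatory (admissible) policy chooses $b_t=\pi_t((v_s,m_s)_{s=1}^{t-1},v_t,U)$ for measurable functions $\pi_t$ and an internal random variable $U$ independent of $\tau$. *)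

theory Defs
  imports "HOL-Probability.Probability"
begin

definition reward :: "real \<Rightarrow> real \<Rightarrow> real \<Rightarrow> real" where
  "reward b v m = (v - b) * (if b \<ge> m then 1 else 0)"

definition mbid :: "nat \<Rightarrow> nat \<Rightarrow> nat \<Rightarrow> real" where
  "mbid H tau t = (if t < tau then 0 else 1 / real H)"

definition vval :: "nat \<Rightarrow> real" where
  "vval t = 1"

definition hist :: "nat \<Rightarrow> nat \<Rightarrow> nat \<Rightarrow> (real \<times> real) list" where
  "hist H tau t = map (\<lambda>s. (vval s, mbid H tau s)) [1..<t]"

text \<open>A policy pol: round t, history, current value, internal randomness u gives a bid.\<close>
definition bid :: "(nat \<Rightarrow> (real \<times> real) list \<Rightarrow> real \<Rightarrow> 'u \<Rightarrow> real)
    \<Rightarrow> nat \<Rightarrow> nat \<Rightarrow> nat \<Rightarrow> 'u \<Rightarrow> real" where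
  "bid pol H tau t u = pol t (hist H tau t) (vval t) u"

definition dyn_regret :: "(nat \<Rightarrow> (real \<times> real) list \<Rightarrow> real \<Rightarrow> 'u \<Rightarrow> real)
    \<Rightarrow> nat \<Rightarrow> nat \<Rightarrow> 'u \<Rightarrow> real" where
  "dyn_regret pol H tau u =
     (\<Sum>t=1..H. max (vval t - mbid H tau t) 0)
     - (\<Sum>t=1..H. reward (bid pol H tau t u) (vval t) (mbid H tau t))"

end

theory Submission
  imports Defs
begin

lemma hist_eq: "t \<le> tau \<Longrightarrow> hist H tau t = hist H t t"
  unfolding hist_def mbid_def by (auto intro!: map_cong)

lemma swap_sum:
  fixes a :: "nat \<Rightarrow> real"
  shows "(\<Sum>tau=1..n. \<Sum>t\<in>{1..<tau}. a t) = (\<Sum>t=1..n. (real n - real t) * a t)"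
proof (induction n)
  case 0 then show ?case by simp
next
  case (Suc n)
  have "(\<Sum>t=1..Suc n. (real (Suc n) - real t) * a t)
      = (\<Sum>t=1..n. (real n - real t) * a t + a t)"
    by (simp add: algebra_simps)
  also have "\<dots> = (\<Sum>t=1..n. (real n - real t) * a t) + (\<Sum>t=1..n. a t)"
    by (simp add: sum.distrib)
  finally show ?case using Suc
    by (simp add: atLeastLessThanSuc_atLeastAtMost)
qed

lemma gauss_sum: "(\<Sum>t=1..n. (real n - real t)) = real n * (real n - 1) / 2"
proof (induction n)
  case 0 then show ?case by simp
next
  case (Suc n)
  have "(\<Sum>t=1..Suc n. (real (Suc n) - real t)) = (\<Sum>t=1..n. (real n - real t) + 1)"
    by (simp, intro sum.cong) auto
  also have "\<dots> = real n * (real n - 1) / 2 + real n" using Suc by (simp add: sum.distrib)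
  finally show ?case by (simp add: field_simps)
qed

definition ff :: "nat \<Rightarrow> real \<Rightarrow> real" where
  "ff H a = (if a \<ge> 1 / real H then a - 1 / real H else 1 - 1 / real H)"

lemma term_bound:
  assumes "H \<ge> 1" "1 \<le> t" "t \<le> H" "0 \<le> a" "a \<le> 1"
  shows "(real H - real t) * a + ff H a \<ge> (real H - real t) / real H"
proof (cases "a \<ge> 1 / real H")
  case True
  have "(real H - real t + 1) * a \<ge> (real H - real t + 1) * (1 / real H)"
    using True assms by (intro mult_left_mono) auto
  moreover have "(real H - real t + 1) * (1 / real H) = (real H - real t) / real H + 1 / real H"
    using assms by (simp add: field_simps)
  ultimately show ?thesis using True by (simp add: ff_def algebra_simps)
next
  case False
  have "(real H - real t) * a \<ge> 0" using assms by simp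
  moreover have "1 - 1 / real H \<ge> (real H - real t) / real H"
    using assms by (simp add: field_simps)
  ultimately show ?thesis using False by (simp add: ff_def)
qed

lemma regret_lower:
  fixes pol :: "nat \<Rightarrow> (real \<times> real) list \<Rightarrow> real \<Rightarrow> 'u \<Rightarrow> real" and u :: 'u
  assumes H: "H \<ge> 1" and tau: "1 \<le> tau" "tau \<le> H"
    and rng: "\<And>t h v u. 0 \<le> pol t h v u \<and> pol t h v u \<le> 1"
  defines "a \<equiv> \<lambda>t. pol t (hist H t t) 1 u"
  shows "dyn_regret pol H tau u \<ge> (\<Sum>t\<in>{1..<tau}. a t) + ff H (a tau)"
proof -
  define g where "g t = max (vval t - mbid H tau t) 0
      - reward (bid pol H tau t u) (vval t) (mbid H tau t)" for t
  have D: "dyn_regret pol H tau u = (\<Sum>t=1..H. g t)"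
    unfolding dyn_regret_def g_def by (simp add: sum_subtractf)
  have gnn: "g t \<ge> 0" if "1 \<le> t" "t \<le> H" for t
  proof -
    have b: "0 \<le> bid pol H tau t u" "bid pol H tau t u \<le> 1"
      using rng unfolding bid_def by auto
    have "1 / real H \<le> 1" using H by simp
    then show ?thesis using b H unfolding g_def reward_def vval_def mbid_def
      by (auto simp: field_simps)
  qed
  have glt: "g t = a t" if "t < tau" for t
  proof -
    have "bid pol H tau t u = a t" using that hist_eq[of t tau H]
      unfolding bid_def a_def vval_def by simp
    then show ?thesis using that rng[of t "hist H t t" 1 u]
      unfolding g_def reward_def vval_def mbid_def a_def by auto
  qed
  have geq: "g tau = ff H (a tau)"
  proof -
    have "bid pol H tau tau u = a tau" unfolding bid_def a_def vval_def by simp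
    moreover have "1 / real H \<le> 1" using H by simp
    ultimately show ?thesis unfolding g_def reward_def vval_def mbid_def ff_def
      by auto
  qed
  have s1: "{1..H} = {1..<tau} \<union> {tau..H}" using tau by auto
  have s2: "{tau..H} = insert tau {tau<..H}" using tau by auto
  have "(\<Sum>t=1..H. g t) = (\<Sum>t\<in>{1..<tau}. g t) + (\<Sum>t\<in>{tau..H}. g t)"
    unfolding s1 by (rule sum.union_disjoint) auto
  moreover have "(\<Sum>t\<in>{tau..H}. g t) = g tau + (\<Sum>t\<in>{tau<..H}. g t)"
    unfolding s2 by (rule sum.insert) auto
  moreover have "(\<Sum>t\<in>{tau<..H}. g t) \<ge> 0" using tau by (intro sum_nonneg gnn) auto
  moreover have "(\<Sum>t\<in>{1..<tau}. g t) = (\<Sum>t\<in>{1..<tau}. a t)" by (intro sum.cong glt) auto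
  ultimately show ?thesis using D geq by linarith
qed

lemma pointwise:
  fixes pol :: "nat \<Rightarrow> (real \<times> real) list \<Rightarrow> real \<Rightarrow> 'u \<Rightarrow> real"
  assumes H: "H \<ge> 1"
    and rng: "\<And>t h v u. 0 \<le> pol t h v u \<and> pol t h v u \<le> 1"
  shows "(1 / real H) * (\<Sum>tau=1..H. dyn_regret pol H tau u) \<ge> 1/2 - 1 / (2 * real H)"
proof -
  define a where "a = (\<lambda>t. pol t (hist H t t) 1 u)"
  have "(\<Sum>tau=1..H. dyn_regret pol H tau u) \<ge> (\<Sum>tau=1..H. (\<Sum>t\<in>{1..<tau}. a t) + ff H (a tau))"
    unfolding a_def by (intro sum_mono regret_lower[OF H _ _ rng]) auto
  also have "(\<Sum>tau=1..H. (\<Sum>t\<in>{1..<tau}. a t) + ff H (a tau))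
      = (\<Sum>t=1..H. (real H - real t) * a t + ff H (a t))"
    by (simp only: sum.distrib swap_sum[of a H])
  also have "(\<Sum>t=1..H. (real H - real t) * a t + ff H (a t)) \<ge> (\<Sum>t=1..H. (real H - real t) / real H)"
    using rng unfolding a_def by (intro sum_mono term_bound[OF H]) auto
  also have "(\<Sum>t=1..H. (real H - real t) / real H) = (real H - 1) / 2"
    using H gauss_sum[of H] by (simp add: sum_divide_distrib[symmetric] field_simps)
  finally have "(real H - 1) / 2 \<le> (\<Sum>tau=1..H. dyn_regret pol H tau u)" .
  then have "(1 / real H) * ((real H - 1) / 2) \<le> (1 / real H) * (\<Sum>tau=1..H. dyn_regret pol H tau u)"
    by (intro mult_left_mono) auto
  moreover have "(1 / real H) * ((real H - 1) / 2) = 1/2 - 1 / (2 * real H)"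
    using H by (simp add: field_simps)
  ultimately show ?thesis by simp
qed

theorem lemma2:
  fixes H :: nat
    and M :: "'u measure"
    and pol :: "nat \<Rightarrow> (real \<times> real) list \<Rightarrow> real \<Rightarrow> 'u \<Rightarrow> real"
  assumes "H \<ge> 2"
    and "prob_space M"
    and "\<And>t h v. (\<lambda>u. pol t h v u) \<in> borel_measurable M"
    and "\<And>t h v u. 0 \<le> pol t h v u \<and> pol t h v u \<le> 1"
  shows "(1 / real H) * (\<Sum>tau=1..H. \<integral>u. dyn_regret pol H tau u \<partial>M)
           \<ge> 1/2 - 1 / (2 * real H)"
proof -
  interpret P: prob_space M by fact
  have H: "H \<ge> 1" using assms(1) by simp
  have meas: "(\<lambda>u. dyn_regret pol H tau u) \<in> borel_measurable M" for tau
  proof -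
    have [measurable]: "(\<lambda>u. bid pol H tau t u) \<in> borel_measurable M" for t
      unfolding bid_def by (rule assms(3))
    show ?thesis unfolding dyn_regret_def reward_def by measurable
  qed
  have bnd: "norm (dyn_regret pol H tau u) \<le> 2 * real H" for tau u
  proof -
    have "\<bar>max (vval t - mbid H tau t) 0\<bar> \<le> 1" for t
      using H unfolding vval_def mbid_def by (auto simp: field_simps)
    moreover have "\<bar>reward (bid pol H tau t u) (vval t) (mbid H tau t)\<bar> \<le> 1" for t
      using assms(4)[of t "hist H tau t" "vval t" u]
      unfolding reward_def vval_def bid_def by auto
    ultimately have A0: "(\<Sum>t=1..H. \<bar>max (vval t - mbid H tau t) 0\<bar>) \<le> real H"
      and B0: "(\<Sum>t=1..H. \<bar>reward (bid pol H tau t u) (vval t) (mbid H tau t)\<bar>) \<le> real H"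
      using sum_bounded_above[of "{1..H}" "\<lambda>t. \<bar>max (vval t - mbid H tau t) 0\<bar>" 1]
        sum_bounded_above[of "{1..H}" "\<lambda>t. \<bar>reward (bid pol H tau t u) (vval t) (mbid H tau t)\<bar>" 1]
      by auto
    have A: "\<bar>\<Sum>t=1..H. max (vval t - mbid H tau t) 0\<bar> \<le> real H"
      by (rule order_trans[OF sum_abs A0])
    have B: "\<bar>\<Sum>t=1..H. reward (bid pol H tau t u) (vval t) (mbid H tau t)\<bar> \<le> real H"
      by (rule order_trans[OF sum_abs B0])
    show ?thesis using A B unfolding dyn_regret_def by simp
  qed
  have int: "integrable M (\<lambda>u. dyn_regret pol H tau u)" for tau
    by (rule P.integrable_const_bound[where B="2 * real H"]) (use bnd meas in auto)
  have e1: "(1 / real H) * (\<Sum>tau=1..H. \<integral>u. dyn_regret pol H tau u \<partial>M)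
      = (\<integral>u. (1 / real H) * (\<Sum>tau=1..H. dyn_regret pol H tau u) \<partial>M)"
  proof -
    have "(\<integral>u. (\<Sum>tau=1..H. dyn_regret pol H tau u) \<partial>M) = (\<Sum>tau=1..H. \<integral>u. dyn_regret pol H tau u \<partial>M)"
      by (rule Bochner_Integration.integral_sum) (rule int)
    then show ?thesis by simp
  qed
  have e2: "(\<integral>u. 1/2 - 1 / (2 * real H) \<partial>M) \<le> (\<integral>u. (1 / real H) * (\<Sum>tau=1..H. dyn_regret pol H tau u) \<partial>M)"
    using int pointwise[OF H assms(4)] by (intro integral_mono) auto
  have e3: "(\<integral>u. 1/2 - 1 / (2 * real H) \<partial>M) = measure M (space M) * (1/2 - 1 / (2 * real H))"
    by simp
  have e4: "measure M (space M) = 1" by (rule P.prob_space)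
  have e5: "(\<integral>u. 1/2 - 1 / (2 * real H) \<partial>M) = 1/2 - 1 / (2 * real H)"
    using e3 e4 by simp
  show ?thesis using e1 e2 e5 by linarith
qed

end
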